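(* Let $q=2^m$ with $m\ge 2$, and let $k$ be an integer with $1\le k\le q+1$ such that $\mathcal C_{\{3,5\}}^\perp|_{\mathrm{GF}(q)}$ contains a codeword of weight $k$. Then $\mathcal B_k(\mathcal C_{\{3,5\}}^\perp|_{\mathrm{GF}(q)})$ is invariant under the action of $\mathrm{Stab}_{U_{q+1}}$. In particular, if $k>3$, the incidence structure $(U_{q+1},\mathcal B_k(\mathcal C_{\{3,5\}}^\perp|_{\mathrm{GF}(q)}))$ is a $3$-design.
   Context: $U_{q+1}$ is the set of $(q+1)$-th roots of unity in $\mathrm{GF}(q^2)$, viewed as a subset of $\mathrm{PG}(1,q^2)=\mathrm{GF}(q^2)\cup\{\infty\}$; coordinates are indexed by $U_{q+1}$. $\mathrm{Stab}_{U_{q+1}}$ is the setwise stabilizer of $U_{q+1}$ in $\mathrm{PGL}_2(\mathrm{GF}(q^2))$ acting by linear fractional transformations. $\mathcal C_{\{3,5\}}=\{(a_3u^3+a_{q-2}u^{q-2}+a_5u^5+a_{q-4}u^{q-4})_{u\in U_{q+1}}: a_i\in\mathrm{GF}(q^2)\}$, $\mathcal C_{\{3,5\}}^\perp$ its dual under the standard inner product, and $\mathcal C^\perp_{\{3,5\}}|_{\mathrm{GF}(q)}=\mathcal C^\perp_{\{3,5\}}\cap\mathrm{GF}(q)^{q+1}$. $\mathcal B_k(\mathcal C)$ is the set of supports of codewords of Hamming weight $k$; invariance means $\pi(B)\in\mathcal B_k$ for all blocks $B$ and all $\pi\in \mathrm{Stab}_{U_{q+1}}$. A $3$-design: every $3$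 points lie in the same positive number of blocks. *)

theory Defs
  imports Main
begin

text \<open>The field GF(q^2) is modelled by an arbitrary finite field type 'a with
  CARD('a) = q^2. Vectors indexed by U_{q+1} are functions 'a => 'a that vanish
  outside U_{q+1}.\<close>

definition Uroots :: "nat \<Rightarrow> 'a::field set" where
  "Uroots q = {u. u ^ (q + 1) = 1}"

definition subGF :: "nat \<Rightarrow> 'a::field set" where
  "subGF q = {x. x ^ q = x}"

definition vecs :: "nat \<Rightarrow> ('a::field \<Rightarrow> 'a) set" where
  "vecs q = {v. \<forall>u. u \<notin> Uroots q \<longrightarrow> v u = 0}"

definition C35 :: "nat \<Rightarrow> ('a::field \<Rightarrow> 'a) set" where
  "C35 q = {c \<in> vecs q. \<exists>a3 a5 b3 b5. \<forall>u \<in> Uroots q.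
      c u = a3 * u ^ 3 + b3 * u ^ (q - 2) + a5 * u ^ 5 + b5 * u ^ (q - 4)}"

definition dual_code :: "nat \<Rightarrow> ('a::field \<Rightarrow> 'a) set \<Rightarrow> ('a \<Rightarrow> 'a) set" where
  "dual_code q C = {v \<in> vecs q. \<forall>c \<in> C. (\<Sum>u \<in> Uroots q. v u * c u) = 0}"

definition subfield_subcode :: "nat \<Rightarrow> ('a::field \<Rightarrow> 'a) set \<Rightarrow> ('a \<Rightarrow> 'a) set" where
  "subfield_subcode q C = {v \<in> C. \<forall>u \<in> Uroots q. v u \<in> subGF q}"

definition supp :: "nat \<Rightarrow> ('a::field \<Rightarrow> 'a) \<Rightarrow> 'a set" where
  "supp q v = {u \<in> Uroots q. v u \<noteq> 0}"

definition wt :: "nat \<Rightarrow> ('a::field \<Rightarrow> 'a) \<Rightarrow> nat" where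
  "wt q v = card (supp q v)"

definition blocks :: "nat \<Rightarrow> nat \<Rightarrow> ('a::field \<Rightarrow> 'a) set \<Rightarrow> 'a set set" where
  "blocks q k C = {supp q v | v. v \<in> C \<and> wt q v = k}"

text \<open>Projective line PG(1,F) = F \<union> {\<infinity>}, with None = \<infinity>.
  Linear fractional transformation z \<mapsto> (a z + b)/(c z + d), ad - bc \<noteq> 0.\<close>

definition mobius :: "'a::field \<Rightarrow> 'a \<Rightarrow> 'a \<Rightarrow> 'a \<Rightarrow> 'a option \<Rightarrow> 'a option" where
  "mobius a b c d z = (case z of
      None \<Rightarrow> (if c = 0 then None else Some (a / c))
    | Some x \<Rightarrow> (if c * x + d = 0 then None else Some ((a * x + b) / (c * x + d))))"

definition PGL2 :: "('a::field option \<Rightarrow> 'a option) set" where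
  "PGL2 = {mobius a b c d | a b c d. a * d - b * c \<noteq> 0}"

definition Stab :: "nat \<Rightarrow> ('a::field option \<Rightarrow> 'a option) set" where
  "Stab q = {\<pi> \<in> PGL2. \<pi> ` (Some ` Uroots q) = Some ` Uroots q}"

definition act :: "('a option \<Rightarrow> 'a option) \<Rightarrow> 'a set \<Rightarrow> 'a set" where
  "act \<pi> B = {y. Some y \<in> \<pi> ` (Some ` B)}"

definition invariant :: "nat \<Rightarrow> 'a::field set set \<Rightarrow> bool" where
  "invariant q \<B> = (\<forall>B \<in> \<B>. \<forall>\<pi> \<in> Stab q. act \<pi> B \<in> \<B>)"

definition is_t_design :: "nat \<Rightarrow> 'a set \<Rightarrow> 'a set set \<Rightarrow> bool" where
  "is_t_design t P \<B> = ((\<forall>B \<in> \<B>. B \<subseteq> P) \<and>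
     (\<exists>lam::nat. lam > 0 \<and> (\<forall>T \<subseteq> P. card T = t \<longrightarrow> card {B \<in> \<B>. T \<subseteq> B} = lam)))"

end

theory Submission imports Defs "HOL-Computational_Algebra.Polynomial" begin

lemma card_times_zero:
  "of_nat (card (UNIV::'a::{field,finite} set)) * (x::'a) = 0"
proof -
  have im: "(\<lambda>y. y + x) ` UNIV = UNIV" by (rule surj_plus_right)
  have "(\<Sum>y\<in>UNIV. y + x) = (\<Sum>y\<in>(\<lambda>y. y + x) ` UNIV. y)"
    by (subst sum.reindex) (auto simp: inj_on_def)
  also have "\<dots> = (\<Sum>y\<in>UNIV. y)" by (simp only: im)
  finally have "(\<Sum>y\<in>UNIV. y + x) = (\<Sum>y\<in>UNIV. y)" .
  moreover have "(\<Sum>y\<in>UNIV. y + x) = (\<Sum>y\<in>UNIV. y) + of_nat (card (UNIV::'a set)) * x"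
    by (simp add: sum.distrib)
  ultimately show ?thesis by simp
qed

lemma fermat:
  assumes "(x::'a::{field,finite}) \<noteq> 0"
  shows "x ^ (card (UNIV::'a set) - 1) = 1"
proof -
  let ?S = "UNIV - {0::'a}"
  have cS: "card ?S = card (UNIV::'a set) - 1" by (simp add: card_Diff_singleton)
  have im: "(\<lambda>y. x * y) ` ?S = ?S"
  proof
    show "(*) x ` ?S \<subseteq> ?S" using assms by auto
    show "?S \<subseteq> (*) x ` ?S"
    proof
      fix z assume "z \<in> ?S"
      then have "z = x * (z / x)" "z / x \<in> ?S" using assms by auto
      then show "z \<in> (*) x ` ?S" by blast
    qed
  qed
  have "(\<Prod>y\<in>?S. x * y) = (\<Prod>y\<in>(\<lambda>y. x * y) ` ?S. y)"
    by (subst prod.reindex) (auto simp: inj_on_def assms)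
  also have "\<dots> = (\<Prod>y\<in>?S. y)" by (simp only: im)
  finally have e1: "(\<Prod>y\<in>?S. x * y) = (\<Prod>y\<in>?S. y)" .
  have e2: "(\<Prod>y\<in>?S. x * y) = x ^ card ?S * (\<Prod>y\<in>?S. y)"
    by (simp add: prod.distrib)
  have ne: "(\<Prod>y\<in>?S. y) \<noteq> 0" by simp
  have "x ^ card ?S = 1" using e1 e2 ne by simp
  then show ?thesis using cS by simp
qed

context
  fixes m q :: nat
  assumes m2: "m \<ge> 2" and qdef: "q = 2 ^ m"
    and cardK: "card (UNIV :: 'a::{field,finite} set) = q ^ 2"
begin

lemma q4: "q \<ge> 4"
proof -
  have "(2::nat)^2 \<le> 2^m" using m2 by (intro power_increasing) auto
  then show ?thesis using qdef by simp
qed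

lemma two_zero: "(1::'a) + 1 = 0"
proof -
  have "of_nat (card (UNIV::'a set)) * (1::'a) = 0" by (rule card_times_zero)
  then have "of_nat (q^2) = (0::'a)" using cardK by simp
  then have "(of_nat q :: 'a)^2 = 0" by (simp only: of_nat_power)
  then have "(of_nat q :: 'a) = 0" by simp
  then have "(of_nat 2 :: 'a)^m = 0" using qdef by (simp only: of_nat_power)
  then have "(of_nat 2 :: 'a) = 0" by simp
  then show ?thesis by simp
qed

lemma two2: "(2::'a) = 0"
  using two_zero by (simp only: one_add_one)

lemma xx: "(x::'a) + x = 0"
proof -
  have "x + x = (1+1)*x" by (simp add: distrib_right)
  then show ?thesis using two_zero by simp
qed

lemma neg_self[simp]: "-(x::'a) = x"
  using xx by (simp add: neg_eq_iff_add_eq_0)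

lemma diff_add[simp]: "(x::'a) - y = x + y"
  by (simp only: diff_conv_add_uminus neg_self)

lemma add_eq0: "(a::'a) + b = 0 \<longleftrightarrow> a = b"
  by (metis eq_neg_iff_add_eq_0 neg_self)

lemma frob: "((x::'a) + y) ^ (2 ^ j) = x ^ (2 ^ j) + y ^ (2 ^ j)"
proof (induction j)
  case 0 then show ?case by simp
next
  case (Suc j)
  have sq: "((a::'a) + b)^2 = a^2 + b^2" for a b
  proof -
    have "(a+b)^2 = a^2 + b^2 + (a*b + a*b)" by (simp add: power2_eq_square algebra_simps)
    then show ?thesis using xx by simp
  qed
  have e: "(z::'a) ^ (2 ^ Suc j) = (z^(2^j))^2" for z
    by (simp add: power_mult[symmetric] mult.commute)
  show ?case unfolding e Suc sq ..
qed

lemma cj_add: "((x::'a) + y) ^ q = x ^ q + y ^ q"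
  using frob qdef by simp

lemma qq: "(x::'a) ^ (q * q) = x"
proof (cases "x = 0")
  case True then show ?thesis using q4 by simp
next
  case False
  have "q * q = (card (UNIV::'a set) - 1) + 1" using cardK q4 by (simp add: power2_eq_square)
  then have "x ^ (q * q) = x ^ (card (UNIV::'a set) - 1) * x" by (simp only: power_add power_one_right)
  then show ?thesis using fermat[OF False] by simp
qed

lemma cj_cj[simp]: "((x::'a) ^ q) ^ q = x"
  using qq by (simp add: power_mult[symmetric])


lemma U_nz: "(u::'a) \<in> Uroots q \<Longrightarrow> u \<noteq> 0"
  by (auto simp: Uroots_def)

lemma U_inv: "(u::'a) \<in> Uroots q \<Longrightarrow> u ^ q * u = 1"
  by (simp add: Uroots_def power_Suc2[symmetric])

lemma cj_U: "(u::'a) \<in> Uroots q \<Longrightarrow> u ^ q = 1 / u"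
  using U_inv U_nz by (simp add: field_simps)

lemma card_U: "card (Uroots q :: 'a set) \<ge> q + 1"
proof -
  define E where "E u = {x::'a. x^(q-1) = u}" for u
  have cE: "card (E u) \<le> q - 1" for u
  proof -
    define p where "p = monom (1::'a) (q-1) - [:u:]"
    have c: "coeff p (q-1) = 1" using q4 by (simp add: p_def coeff_pCons split: nat.split)
    then have pn: "p \<noteq> 0" by auto
    have dp: "degree p \<le> q - 1" unfolding p_def
      by (intro degree_diff_le degree_monom_le) simp
    have "E u = {x. poly p x = 0}" by (simp add: E_def p_def poly_monom add_eq0)
    then show ?thesis using card_poly_roots_bound[OF pn] dp by simp
  qed
  have cov: "UNIV - {0} \<subseteq> (\<Union>u\<in>Uroots q. E u)"
  proof
    fix x :: 'a assume "x \<in> UNIV - {0}"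
    then have x0: "x \<noteq> 0" by simp
    have qq1: "q * q = (q*q - 1) + 1" using q4 by simp
    have "x ^ (q * q - 1) * x = x" using qq[of x] qq1
      by (metis power_add power_one_right)
    then have x1: "x ^ (q * q - 1) = 1" using x0 by simp
    have "(q - 1) * (q + 1) = q * q - 1" using q4 by (simp add: algebra_simps)
    then have "(x^(q-1))^(q+1) = 1" using x1 by (metis power_mult)
    then have "x^(q-1) \<in> Uroots q" by (simp add: Uroots_def)
    then show "x \<in> (\<Union>u\<in>Uroots q. E u)" by (auto simp: E_def)
  qed
  have "q * q - 1 = card (UNIV - {0::'a})" using cardK by (simp add: card_Diff_singleton power2_eq_square)
  also have "\<dots> \<le> card (\<Union>u\<in>Uroots q. E u)" by (intro card_mono cov) simp
  also have "\<dots> \<le> (\<Sum>u\<in>Uroots q. card (E u))" by (rule card_UN_le) simp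
  also have "\<dots> \<le> (\<Sum>u\<in>(Uroots q::'a set). q - 1)" by (intro sum_mono cE)
  also have "\<dots> = card (Uroots q :: 'a set) * (q - 1)" by simp
  finally have "(q + 1) * (q - 1) \<le> card (Uroots q :: 'a set) * (q - 1)"
    using q4 by (simp add: algebra_simps)
  then have "0 < q - 1 \<longrightarrow> q + 1 \<le> card (Uroots q :: 'a set)" by (simp only: mult_le_cancel2)
  then show ?thesis using q4 by simp
qed


lemma cj_mult: "((x::'a) * y) ^ q = x ^ q * y ^ q"
  by (simp add: power_mult_distrib)

lemma mono_in_C35:
  assumes "j \<in> {3, q-2, 5, q-4}"
  shows "(\<lambda>u::'a. if u \<in> Uroots q then u ^ j else 0) \<in> C35 q"
proof -
  have "(\<lambda>u::'a. if u \<in> Uroots q then u ^ j else 0) \<in> vecs q" by (simp add: vecs_def)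
  moreover have "\<exists>a3 a5 b3 b5. \<forall>u \<in> Uroots q.
      (if u \<in> Uroots q then u ^ j else 0) = a3 * u ^ 3 + b3 * u ^ (q - 2) + a5 * u ^ 5 + b5 * (u::'a) ^ (q - 4)"
    using assms
  proof (elim insertE)
    assume "j = 3" then show ?thesis
      by (rule_tac exI[of _ 1], rule_tac exI[of _ 0], rule_tac exI[of _ 0], rule_tac exI[of _ 0]) simp
  next
    assume "j = q - 2" then show ?thesis
      by (rule_tac exI[of _ 0], rule_tac exI[of _ 0], rule_tac exI[of _ 1], rule_tac exI[of _ 0]) simp
  next
    assume "j = 5" then show ?thesis
      by (rule_tac exI[of _ 0], rule_tac exI[of _ 1], rule_tac exI[of _ 0], rule_tac exI[of _ 0]) simp
  next
    assume "j = q - 4" then show ?thesis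
      by (rule_tac exI[of _ 0], rule_tac exI[of _ 0], rule_tac exI[of _ 0], rule_tac exI[of _ 1]) simp
  qed simp
  ultimately show ?thesis unfolding C35_def by blast
qed

lemma DD_iff:
  "v \<in> subfield_subcode q (dual_code q (C35 q :: ('a \<Rightarrow> 'a) set)) \<longleftrightarrow>
    v \<in> vecs q \<and> (\<forall>u\<in>Uroots q. v u \<in> subGF q) \<and>
    (\<forall>j \<in> {3, q-2, 5, q-4}. (\<Sum>u\<in>Uroots q. v u * u ^ j) = 0)"
proof
  assume A: "v \<in> subfield_subcode q (dual_code q (C35 q :: ('a \<Rightarrow> 'a) set))"
  then have v: "v \<in> vecs q" "\<forall>u\<in>Uroots q. v u \<in> subGF q"
    and D: "\<forall>c \<in> (C35 q :: ('a \<Rightarrow> 'a) set). (\<Sum>u \<in> Uroots q. v u * c u) = 0"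
    by (auto simp: subfield_subcode_def dual_code_def)
  have "(\<Sum>u\<in>Uroots q. v u * u ^ j) = 0" if j: "j \<in> {3, q-2, 5, q-4}" for j
  proof -
    have "(\<Sum>u\<in>Uroots q. v u * (\<lambda>u::'a. if u \<in> Uroots q then u ^ j else 0) u) = 0"
      using bspec[OF D mono_in_C35[OF j]] by simp
    moreover have "(\<Sum>u\<in>Uroots q. v u * (\<lambda>u::'a. if u \<in> Uroots q then u ^ j else 0) u)
       = (\<Sum>u\<in>Uroots q. v u * u ^ j)" by (intro sum.cong) auto
    ultimately show ?thesis by simp
  qed
  then show "v \<in> vecs q \<and> (\<forall>u\<in>Uroots q. v u \<in> subGF q) \<and>
    (\<forall>j \<in> {3, q-2, 5, q-4}. (\<Sum>u\<in>Uroots q. v u * u ^ j) = 0)" using v by blast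
next
  assume A: "v \<in> vecs q \<and> (\<forall>u\<in>Uroots q. v u \<in> subGF q) \<and>
    (\<forall>j \<in> {3, q-2, 5, q-4}. (\<Sum>u\<in>Uroots q. v u * u ^ j) = 0)"
  have "(\<Sum>u \<in> Uroots q. v u * c u) = 0" if c: "c \<in> C35 q" for c
  proof -
    obtain a3 a5 b3 b5 where ab: "\<forall>u \<in> Uroots q.
      c u = a3 * u ^ 3 + b3 * u ^ (q - 2) + a5 * u ^ 5 + b5 * u ^ (q - 4)"
      using c unfolding C35_def by blast
    have "(\<Sum>u \<in> Uroots q. v u * c u) = (\<Sum>u \<in> Uroots q.
        a3 * (v u * u ^ 3) + b3 * (v u * u ^ (q - 2)) + a5 * (v u * u ^ 5) + b5 * (v u * u ^ (q - 4)))"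
      using ab by (intro sum.cong) (auto simp: algebra_simps)
    also have "\<dots> = a3 * (\<Sum>u \<in> Uroots q. v u * u ^ 3) + b3 * (\<Sum>u \<in> Uroots q. v u * u ^ (q - 2))
       + a5 * (\<Sum>u \<in> Uroots q. v u * u ^ 5) + b5 * (\<Sum>u \<in> Uroots q. v u * u ^ (q - 4))"
      by (simp add: sum.distrib sum_distrib_left)
    also have "\<dots> = 0" using A by simp
    finally show ?thesis .
  qed
  then show "v \<in> subfield_subcode q (dual_code q (C35 q :: ('a \<Rightarrow> 'a) set))"
    using A by (auto simp: subfield_subcode_def dual_code_def)
qed


lemma cj_sum: "finite A \<Longrightarrow> (sum f A :: 'a) ^ q = (\<Sum>x\<in>A. (f x) ^ q)"
proof (induction A rule: finite_induct)
  case empty then show ?case using q4 by simp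
next
  case (insert x F) then show ?case by (simp add: cj_add)
qed

lemma U_pows:
  assumes "(u::'a) \<in> Uroots q"
  shows "u ^ (q - 2) = 1 / u ^ 3" "u ^ (q - 4) = 1 / u ^ 5" "u ^ (3 * q) = u ^ (q - 2)"
    "u ^ (5 * q) = u ^ (q - 4)"
proof -
  have u1: "u ^ (q + 1) = 1" using assms by (simp add: Uroots_def)
  have u0: "u \<noteq> 0" using U_nz[OF assms] .
  have "u ^ (q - 2) * u ^ 3 = 1" using u1 q4 by (simp add: power_add[symmetric])
  then show a: "u ^ (q - 2) = 1 / u ^ 3" using u0 by (simp add: field_simps)
  have "u ^ (q - 4) * u ^ 5 = 1" using u1 q4 by (simp add: power_add[symmetric])
  then show b: "u ^ (q - 4) = 1 / u ^ 5" using u0 by (simp add: field_simps)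
  have c: "u ^ q = 1 / u" using cj_U[OF assms] .
  have "u ^ (3 * q) = (u^q)^3" by (metis power_mult mult.commute)
  then show "u ^ (3 * q) = u ^ (q - 2)" unfolding a c by (simp add: power_one_over)
  have "u ^ (5 * q) = (u^q)^5" by (metis power_mult mult.commute)
  then show "u ^ (5 * q) = u ^ (q - 4)" unfolding b c by (simp add: power_one_over)
qed

lemma conj_sums:
  assumes "\<forall>u\<in>Uroots q. (w::'a \<Rightarrow> 'a) u \<in> subGF q"
  shows "(\<Sum>u\<in>Uroots q. w u * u ^ 3) ^ q = (\<Sum>u\<in>Uroots q. w u * u ^ (q-2))"
    "(\<Sum>u\<in>Uroots q. w u * u ^ 5) ^ q = (\<Sum>u\<in>Uroots q. w u * u ^ (q-4))"
proof -
  have wq: "w u ^ q = w u" if "u \<in> Uroots q" for u using assms that by (simp add: subGF_def)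
  show "(\<Sum>u\<in>Uroots q. w u * u ^ 3) ^ q = (\<Sum>u\<in>Uroots q. w u * u ^ (q-2))"
    by (simp add: cj_sum cj_mult, intro sum.cong refl)
      (simp add: wq U_pows(3)[symmetric] power_mult[symmetric] mult.commute)
  show "(\<Sum>u\<in>Uroots q. w u * u ^ 5) ^ q = (\<Sum>u\<in>Uroots q. w u * u ^ (q-4))"
    by (simp add: cj_sum cj_mult, intro sum.cong refl)
      (simp add: wq U_pows(4)[symmetric] power_mult[symmetric] mult.commute)
qed

lemma DD_iff2:
  "v \<in> subfield_subcode q (dual_code q (C35 q :: ('a \<Rightarrow> 'a) set)) \<longleftrightarrow>
    v \<in> vecs q \<and> (\<forall>u\<in>Uroots q. v u \<in> subGF q) \<and>
    (\<Sum>u\<in>Uroots q. v u * u ^ 3) = 0 \<and> (\<Sum>u\<in>Uroots q. v u * u ^ 5) = 0"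
proof -
  have z: "(0::'a)^q = 0" using q4 by simp
  show ?thesis unfolding DD_iff
  proof (intro iffI; elim conjE; intro conjI)
    fix v' assume "\<forall>j\<in>{3, q - 2, 5, q - 4}. (\<Sum>u\<in>Uroots q. v u * u ^ j) = 0"
    then show "(\<Sum>u\<in>Uroots q. v u * u ^ 3) = 0" "(\<Sum>u\<in>Uroots q. v u * u ^ 5) = 0" by auto
  next
    assume g: "\<forall>u\<in>Uroots q. v u \<in> subGF q" and s3: "(\<Sum>u\<in>Uroots q. v u * u ^ 3) = 0"
      and s5: "(\<Sum>u\<in>Uroots q. v u * u ^ 5) = 0"
    have "(\<Sum>u\<in>Uroots q. v u * u ^ (q-2)) = 0" using conj_sums(1)[OF g] s3 z by simp
    moreover have "(\<Sum>u\<in>Uroots q. v u * u ^ (q-4)) = 0" using conj_sums(2)[OF g] s5 z by simp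
    ultimately show "\<forall>j\<in>{3, q - 2, 5, q - 4}. (\<Sum>u\<in>Uroots q. v u * u ^ j) = 0"
      using s3 s5 by auto
  qed auto
qed

lemma quad_zero:
  assumes "\<forall>u\<in>Uroots q. \<alpha> * u^2 + \<beta> * u + (\<gamma>::'a) = 0"
  shows "\<alpha> = 0 \<and> \<beta> = 0 \<and> \<gamma> = 0"
proof -
  define p where "p = [:\<gamma>, \<beta>, \<alpha>:]"
  have "p = 0"
  proof (rule ccontr)
    assume pn: "p \<noteq> 0"
    have "Uroots q \<subseteq> {x. poly p x = 0}" using assms
      by (auto simp: p_def power2_eq_square algebra_simps)
    then have "card (Uroots q :: 'a set) \<le> card {x. poly p x = 0}" by (intro card_mono) auto
    also have "\<dots> \<le> degree p" by (rule card_poly_roots_bound[OF pn])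
    also have "\<dots> \<le> 2" by (simp add: p_def)
    finally show False using card_U q4 by simp
  qed
  then show ?thesis by (simp add: p_def)
qed


lemma stab_bij:
  assumes "\<pi> \<in> Stab q"
  shows "\<exists>g. bij_betw g (Uroots q) (Uroots q :: 'a set) \<and> (\<forall>u\<in>Uroots q. \<pi> (Some u) = Some (g u))"
proof -
  have im: "\<pi> ` (Some ` Uroots q) = Some ` (Uroots q :: 'a set)" using assms by (simp add: Stab_def)
  define g where "g u = the (\<pi> (Some u))" for u :: 'a
  have gs: "\<pi> (Some u) = Some (g u)" "g u \<in> Uroots q" if "u \<in> Uroots q" for u
  proof -
    have "\<pi> (Some u) \<in> Some ` Uroots q" using im that by blast
    then obtain y where "y \<in> Uroots q" "\<pi> (Some u) = Some y" by blast
    then show "\<pi> (Some u) = Some (g u)" "g u \<in> Uroots q" by (auto simp: g_def)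
  qed
  have "Some ` (g ` Uroots q) = Some ` (Uroots q :: 'a set)"
  proof -
    have "Some ` (g ` Uroots q) = \<pi> ` (Some ` Uroots q)"
      by (auto simp: image_image gs(1) intro!: image_cong)
    then show ?thesis using im by simp
  qed
  then have gU: "g ` Uroots q = Uroots q" by (simp add: inj_image_eq_iff)
  then have "inj_on g (Uroots q)" by (intro eq_card_imp_inj_on) auto
  then have "bij_betw g (Uroots q) (Uroots q)" using gU by (simp add: bij_betw_def)
  then show ?thesis using gs by blast
qed

lemma act_eq:
  assumes "\<forall>u\<in>Uroots q. \<pi> (Some u) = Some ((g::'a \<Rightarrow> 'a) u)" "B \<subseteq> Uroots q"
  shows "act \<pi> B = g ` B"
  using assms by (auto simp: act_def image_iff) (metis option.inject subsetD)+

lemma alg1: "a*B = c*D \<Longrightarrow> a*A + c*C = b*B + d*(D::'a) \<Longrightarrow> c*(a*A + c*C) = (a*d + b*c)*B"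
  by algebra

lemma alg2: "b*A = d*(C::'a) \<Longrightarrow> d*(a*A + c*C) = (a*d + b*c)*A"
  by algebra

lemma stab_form:
  assumes pi: "\<pi> \<in> Stab q" and g: "\<forall>u\<in>Uroots q. \<pi> (Some u) = Some ((g::'a \<Rightarrow> 'a) u)"
    and gU: "\<forall>u\<in>Uroots q. g u \<in> Uroots q"
  shows "\<exists>a b \<mu>. \<mu> \<noteq> 0 \<and> (\<forall>u\<in>Uroots q. b^q*u + a^q \<noteq> 0 \<and> a*u + b \<noteq> 0 \<and>
     g u = (a*u+b)/(\<mu>*(b^q*u+a^q)))"
proof -
  obtain a b c d where pid: "\<pi> = mobius a b c d" and det: "a * d - b * c \<noteq> (0::'a)"
    using pi by (auto simp: Stab_def PGL2_def)
  have det': "a * d + b * c \<noteq> 0" using det by simp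
  have den: "c*u + d \<noteq> 0" and gu: "g u = (a*u+b)/(c*u+d)" if u: "(u::'a) \<in> Uroots q" for u
  proof -
    have "mobius a b c d (Some u) = Some (g u)" using g u pid by simp
    then show "c*u + d \<noteq> 0" "g u = (a*u+b)/(c*u+d)" by (auto simp: mobius_def split: if_splits)
  qed
  have quad: "(a*b^q + c*d^q) * u^2 + (a*a^q + b*b^q + c*c^q + d*d^q) * u + (b*a^q + d*c^q) = 0"
    if u: "(u::'a) \<in> Uroots q" for u
  proof -
    have u0: "u \<noteq> 0" using U_nz[OF u] .
    have uq: "u^q = 1/u" using cj_U[OF u] .
    have "(g u)^(q+1) = 1" using gU u by (simp add: Uroots_def)
    then have "(a*u+b)^(q+1) = (c*u+d)^(q+1)" using den[OF u] by (simp add: gu[OF u] power_divide)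
    then have "(a*u+b)*(a^q*u^q+b^q) = (c*u+d)*(c^q*u^q+d^q)"
      by (simp add: power_Suc2 cj_add cj_mult mult.commute)
    then have e: "(a*u+b)*(a^q/u+b^q) = (c*u+d)*(c^q/u+d^q)" by (simp add: uq)
    have h0: "(a*u+b)*(a^q/u+b^q) + (c*u+d)*(c^q/u+d^q) = 0" using e by (simp only: add_eq0)
    have "(a*b^q + c*d^q) * u^2 + (a*a^q + b*b^q + c*c^q + d*d^q) * u + (b*a^q + d*c^q)
       = u*((a*u+b)*(a^q/u+b^q)) + u*((c*u+d)*(c^q/u+d^q))"
      using u0 by (simp add: field_simps power2_eq_square)
    also have "\<dots> = u*((a*u+b)*(a^q/u+b^q) + (c*u+d)*(c^q/u+d^q))" by (simp only: distrib_left)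
    finally show ?thesis using h0 by simp
  qed
  have Z: "a*b^q + c*d^q = 0 \<and> a*a^q + b*b^q + c*c^q + d*d^q = 0 \<and> b*a^q + d*c^q = 0"
    by (rule quad_zero) (use quad in auto)
  have z1: "a*b^q = c*d^q" using Z by (simp add: add_eq0)
  have "(a*a^q + c*c^q) + (b*b^q + d*d^q) = 0" using Z by (simp only: add_ac)
  then have z2: "a*a^q + c*c^q = b*b^q + d*d^q" by (simp only: add_eq0)
  have z3: "b*a^q = d*c^q" using Z by (simp add: add_eq0)
  define n where "n = a*a^q + c*c^q"
  have cn: "c * n = (a*d + b*c) * b^q" unfolding n_def by (rule alg1[OF z1 z2])
  have dn: "d * n = (a*d + b*c) * a^q" unfolding n_def by (rule alg2[OF z3])
  have n0: "n \<noteq> 0"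
  proof
    assume "n = 0"
    then have "b^q = 0" "a^q = 0" using cn dn det' by auto
    then have "a = 0" "b = 0" by auto
    then show False using det' by simp
  qed
  define \<mu> where "\<mu> = (a*d + b*c) / n"
  have mu0: "\<mu> \<noteq> 0" using n0 det' by (simp add: \<mu>_def)
  have c: "c = \<mu> * b^q" using cn n0 by (simp add: \<mu>_def field_simps)
  have d: "d = \<mu> * a^q" using dn n0 by (simp add: \<mu>_def field_simps)
  have "\<forall>u\<in>Uroots q. b^q*u + a^q \<noteq> 0 \<and> a*u + b \<noteq> 0 \<and> g u = (a*u+b)/(\<mu>*(b^q*u+a^q))"
  proof
    fix u :: 'a assume u: "u \<in> Uroots q"
    have cd: "c*u + d = \<mu>*(b^q*u+a^q)" by (simp add: c d algebra_simps)
    have "g u \<noteq> 0" using U_nz gU u by blast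
    then show "b^q*u + a^q \<noteq> 0 \<and> a*u + b \<noteq> 0 \<and> g u = (a*u+b)/(\<mu>*(b^q*u+a^q))"
      using den[OF u] gu[OF u] cd by auto
  qed
  then show ?thesis using mu0 by blast
qed


lemma id3:
  assumes "(u::'a) \<noteq> 0" "t \<noteq> 0" "\<mu> \<noteq> 0"
  shows "(s*t*(1/u))^5 * (s/(\<mu>*t))^3 = s^8*t^2/(\<mu>^3*u^5)"
  using assms by (simp add: field_simps power_mult_distrib power_divide eval_nat_numeral)

lemma id5:
  assumes "(u::'a) \<noteq> 0" "t \<noteq> 0" "\<mu> \<noteq> 0"
  shows "(s*t*(1/u))^5 * (s/(\<mu>*t))^5 = s^10/(\<mu>^5*u^5)"
  using assms by (simp add: field_simps power_mult_distrib power_divide eval_nat_numeral)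

lemma frob8: "((x::'a) + y)^8 = x^8 + y^8" using frob[of x y 3] by simp
lemma frob2: "((x::'a) + y)^2 = x^2 + y^2" using frob[of x y 1] by simp

lemma expand3:
  assumes "(u::'a) \<noteq> 0" "\<mu> \<noteq> 0"
  shows "(a*u+b)^8*(B*u+A)^2/(\<mu>^3*u^5) = (1/\<mu>^3) * (a^8*B^2*u^5 + a^8*A^2*u^3 + b^8*B^2*(1/u^3) + b^8*A^2*(1/u^5))"
proof -
  have "(a*u+b)^8*(B*u+A)^2 = (a^8*u^8+b^8)*(B^2*u^2+A^2)"
    by (simp add: frob8 frob2 power_mult_distrib)
  then show ?thesis using assms by (simp add: field_simps eval_nat_numeral)
qed

lemma expand5:
  assumes "(u::'a) \<noteq> 0" "\<mu> \<noteq> 0"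
  shows "(a*u+b)^10/(\<mu>^5*u^5) = (1/\<mu>^5) * (a^10*u^5 + a^8*b^2*u^3 + a^2*b^8*(1/u^3) + b^10*(1/u^5))"
proof -
  have "(a*u+b)^10 = (a*u+b)^8*(a*u+b)^2" by (simp add: power_add[symmetric])
  also have "\<dots> = (a^8*u^8+b^8)*(a^2*u^2+b^2)"
    by (simp add: frob8 frob2 power_mult_distrib)
  finally have e: "(a*u+b)^10 = (a^8*u^8+b^8)*(a^2*u^2+b^2)" .
  show ?thesis unfolding e using assms by (simp add: field_simps eval_nat_numeral)
qed


lemma inv_main:
  assumes v: "v \<in> subfield_subcode q (dual_code q (C35 q :: ('a \<Rightarrow> 'a) set))"
    and pi: "\<pi> \<in> Stab q"
  shows "act \<pi> (supp q v) \<in> blocks q (wt q v) (subfield_subcode q (dual_code q (C35 q :: ('a \<Rightarrow> 'a) set)))"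
proof -
  let ?U = "Uroots q :: 'a set"
  obtain g where bij: "bij_betw g ?U ?U" and gs: "\<forall>u\<in>?U. \<pi> (Some u) = Some (g u)"
    using stab_bij[OF pi] by blast
  have gU: "\<forall>u\<in>?U. g u \<in> ?U" using bij bij_betwE by blast
  have ginj: "inj_on g ?U" using bij bij_betw_def by blast
  obtain a b \<mu> where mu0: "\<mu> \<noteq> 0" and
    F: "\<forall>u\<in>?U. b^q*u + a^q \<noteq> 0 \<and> a*u + b \<noteq> 0 \<and> g u = (a*u+b)/(\<mu>*(b^q*u+a^q))"
    using stab_form[OF pi gs gU] by blast
  define h where "h = the_inv_into ?U g"
  have hU: "h y \<in> ?U" and gh: "g (h y) = y" if "y \<in> ?U" for y
    using bij_betw_the_inv_into[OF bij] that f_the_inv_into_f_bij_betw[OF bij that] unfolding h_def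
    by (auto simp: bij_betw_def)
  have hg: "h (g u) = u" if "u \<in> ?U" for u
    unfolding h_def using the_inv_into_f_f[OF ginj that] .
  define \<rho> where "\<rho> u = ((a*u+b)*(b^q*u+a^q)*u^q)^5" for u
  have rho0: "\<rho> u \<noteq> 0" if u: "u \<in> ?U" for u
    using F u U_nz[OF u] by (simp add: \<rho>_def)
  have rhoq: "\<rho> u ^ q = \<rho> u" if u: "u \<in> ?U" for u
  proof -
    have u0: "u \<noteq> 0" using U_nz[OF u] .
    have uq: "u^q = 1/u" using cj_U[OF u] .
    have "((a*u+b)*(b^q*u+a^q)*u^q)^q = (a^q*u^q+b^q)*(b*u^q+a)*u"
      by (simp add: cj_mult cj_add)
    also have "\<dots> = (a*u+b)*(b^q*u+a^q)*u^q" unfolding uq using u0 by (simp add: field_simps)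
    finally have e: "((a*u+b)*(b^q*u+a^q)*u^q)^q = (a*u+b)*(b^q*u+a^q)*u^q" .
    have "\<rho> u ^ q = (((a*u+b)*(b^q*u+a^q)*u^q)^q)^5"
      unfolding \<rho>_def by (simp only: power_mult[symmetric] mult.commute)
    then show ?thesis unfolding e \<rho>_def .
  qed
  define v' where "v' y = (if y \<in> ?U then \<rho> (h y) * v (h y) else 0)" for y
  have vd: "v \<in> vecs q" "\<forall>u\<in>?U. v u \<in> subGF q"
    and vs: "\<forall>j \<in> {3, q-2, 5, q-4}. (\<Sum>u\<in>?U. v u * u ^ j) = 0"
    using v unfolding DD_iff by auto
  have v'g: "v' (g u) = \<rho> u * v u" if "u \<in> ?U" for u
    using that gU hg by (simp add: v'_def)
  have v'vec: "v' \<in> vecs q" by (simp add: vecs_def v'_def)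
  have v'GF: "\<forall>y\<in>?U. v' y \<in> subGF q"
  proof
    fix y assume y: "y \<in> ?U"
    have "v (h y) ^ q = v (h y)" using vd(2) hU[OF y] by (simp add: subGF_def)
    then show "v' y \<in> subGF q" using y rhoq[OF hU[OF y]] by (simp add: v'_def subGF_def cj_mult)
  qed
  have reidx: "(\<Sum>y\<in>?U. v' y * y ^ j) = (\<Sum>u\<in>?U. \<rho> u * v u * (g u) ^ j)" for j
  proof -
    have "(\<Sum>y\<in>?U. v' y * y ^ j) = (\<Sum>u\<in>?U. v' (g u) * (g u) ^ j)"
      using sum.reindex_bij_betw[OF bij, of "\<lambda>y. v' y * y ^ j"] by simp
    also have "\<dots> = (\<Sum>u\<in>?U. \<rho> u * v u * (g u) ^ j)" by (intro sum.cong refl) (simp add: v'g)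
    finally show ?thesis .
  qed
  have s3: "(\<Sum>y\<in>?U. v' y * y ^ 3) = 0"
  proof -
    have "(\<Sum>u\<in>?U. \<rho> u * v u * (g u) ^ 3) = (\<Sum>u\<in>?U. (1/\<mu>^3) * (a^8*(b^q)^2*(v u * u^5)
        + a^8*(a^q)^2*(v u * u^3) + b^8*(b^q)^2*(v u * u^(q-2)) + b^8*(a^q)^2*(v u * u^(q-4))))"
    proof (intro sum.cong refl)
      fix u assume u: "u \<in> ?U"
      have u0: "u \<noteq> 0" using U_nz[OF u] .
      have "\<rho> u * (g u)^3 = (a*u+b)^8*(b^q*u+a^q)^2/(\<mu>^3*u^5)"
        unfolding \<rho>_def cj_U[OF u] using F u id3[OF u0 _ mu0] by auto
      also have "\<dots> = (1/\<mu>^3) * (a^8*(b^q)^2*u^5 + a^8*(a^q)^2*u^3 + b^8*(b^q)^2*(1/u^3) + b^8*(a^q)^2*(1/u^5))"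
        by (rule expand3[OF u0 mu0])
      finally have E: "\<rho> u * (g u)^3 = (1/\<mu>^3) * (a^8*(b^q)^2*u^5 + a^8*(a^q)^2*u^3 + b^8*(b^q)^2*(1/u^3) + b^8*(a^q)^2*(1/u^5))" .
      have "\<rho> u * v u * (g u) ^ 3 = v u * (\<rho> u * (g u)^3)" by (simp only: mult_ac)
      also have "\<dots> = v u * ((1/\<mu>^3) * (a^8*(b^q)^2*u^5 + a^8*(a^q)^2*u^3 + b^8*(b^q)^2*(1/u^3) + b^8*(a^q)^2*(1/u^5)))" by (simp only: E)
      also have "\<dots> = (1/\<mu>^3) * (a^8*(b^q)^2*(v u * u^5)
        + a^8*(a^q)^2*(v u * u^3) + b^8*(b^q)^2*(v u * (1/u^3)) + b^8*(a^q)^2*(v u * (1/u^5)))" by (simp add: algebra_simps)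
      finally show "\<rho> u * v u * (g u) ^ 3 = (1/\<mu>^3) * (a^8*(b^q)^2*(v u * u^5)
        + a^8*(a^q)^2*(v u * u^3) + b^8*(b^q)^2*(v u * u^(q-2)) + b^8*(a^q)^2*(v u * u^(q-4)))"
        unfolding U_pows(1,2)[OF u] .
    qed
    also have "\<dots> = (1/\<mu>^3) * (a^8*(b^q)^2*(\<Sum>u\<in>?U. v u * u^5)
        + a^8*(a^q)^2*(\<Sum>u\<in>?U. v u * u^3) + b^8*(b^q)^2*(\<Sum>u\<in>?U. v u * u^(q-2))
        + b^8*(a^q)^2*(\<Sum>u\<in>?U. v u * u^(q-4)))"
      by (simp only: sum_distrib_left[symmetric] sum.distrib)
    also have "\<dots> = 0" using vs by simp
    finally show ?thesis using reidx by simp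
  qed
  have s5: "(\<Sum>y\<in>?U. v' y * y ^ 5) = 0"
  proof -
    have "(\<Sum>u\<in>?U. \<rho> u * v u * (g u) ^ 5) = (\<Sum>u\<in>?U. (1/\<mu>^5) * (a^10*(v u * u^5)
        + a^8*b^2*(v u * u^3) + a^2*b^8*(v u * u^(q-2)) + b^10*(v u * u^(q-4))))"
    proof (intro sum.cong refl)
      fix u assume u: "u \<in> ?U"
      have u0: "u \<noteq> 0" using U_nz[OF u] .
      have "\<rho> u * (g u)^5 = (a*u+b)^10/(\<mu>^5*u^5)"
        unfolding \<rho>_def cj_U[OF u] using F u id5[OF u0 _ mu0] by auto
      also have "\<dots> = (1/\<mu>^5) * (a^10*u^5 + a^8*b^2*u^3 + a^2*b^8*(1/u^3) + b^10*(1/u^5))"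
        by (rule expand5[OF u0 mu0])
      finally have E: "\<rho> u * (g u)^5 = (1/\<mu>^5) * (a^10*u^5 + a^8*b^2*u^3 + a^2*b^8*(1/u^3) + b^10*(1/u^5))" .
      have "\<rho> u * v u * (g u) ^ 5 = v u * (\<rho> u * (g u)^5)" by (simp only: mult_ac)
      also have "\<dots> = v u * ((1/\<mu>^5) * (a^10*u^5 + a^8*b^2*u^3 + a^2*b^8*(1/u^3) + b^10*(1/u^5)))" by (simp only: E)
      also have "\<dots> = (1/\<mu>^5) * (a^10*(v u * u^5)
        + a^8*b^2*(v u * u^3) + a^2*b^8*(v u * (1/u^3)) + b^10*(v u * (1/u^5)))" by (simp add: algebra_simps)
      finally show "\<rho> u * v u * (g u) ^ 5 = (1/\<mu>^5) * (a^10*(v u * u^5)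
        + a^8*b^2*(v u * u^3) + a^2*b^8*(v u * u^(q-2)) + b^10*(v u * u^(q-4)))"
        unfolding U_pows(1,2)[OF u] .
    qed
    also have "\<dots> = (1/\<mu>^5) * (a^10*(\<Sum>u\<in>?U. v u * u^5)
        + a^8*b^2*(\<Sum>u\<in>?U. v u * u^3) + a^2*b^8*(\<Sum>u\<in>?U. v u * u^(q-2))
        + b^10*(\<Sum>u\<in>?U. v u * u^(q-4)))"
      by (simp only: sum_distrib_left[symmetric] sum.distrib)
    also have "\<dots> = 0" using vs by simp
    finally show ?thesis using reidx by simp
  qed
  have v'D: "v' \<in> subfield_subcode q (dual_code q (C35 q :: ('a \<Rightarrow> 'a) set))"
    unfolding DD_iff2 using v'vec v'GF s3 s5 by blast
  have suppv: "supp q v \<subseteq> ?U" by (auto simp: supp_def)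
  have supp': "supp q v' = g ` supp q v"
  proof
    show "supp q v' \<subseteq> g ` supp q v"
    proof
      fix y assume "y \<in> supp q v'"
      then have y: "y \<in> ?U" and nz: "v' y \<noteq> 0" by (auto simp: supp_def)
      then have "v (h y) \<noteq> 0" by (simp add: v'_def)
      then have "h y \<in> supp q v" using hU[OF y] by (simp add: supp_def)
      then show "y \<in> g ` supp q v" using gh[OF y] by (metis image_eqI)
    qed
    show "g ` supp q v \<subseteq> supp q v'"
    proof
      fix y assume "y \<in> g ` supp q v"
      then obtain u where u: "u \<in> ?U" "v u \<noteq> 0" and y: "y = g u" by (auto simp: supp_def)
      have "v' y \<noteq> 0" using v'g[OF u(1)] rho0[OF u(1)] u(2) y by simp
      then show "y \<in> supp q v'" using gU u(1) y by (simp add: supp_def)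
    qed
  qed
  have "wt q v' = wt q v" unfolding wt_def supp'
    by (rule card_image) (rule inj_on_subset[OF ginj suppv])
  moreover have "act \<pi> (supp q v) = supp q v'" using act_eq[OF gs suppv] supp' by simp
  ultimately show ?thesis using v'D unfolding blocks_def by auto
qed


lemma ring_det: "(A*\<alpha>+B*\<gamma>)*(C*\<beta>+D*\<delta>) - (A*\<beta>+B*\<delta>)*(C*\<alpha>+D*\<gamma>) = (A*D - B*C)*(\<alpha>*\<delta> - \<beta>*(\<gamma>::'b::comm_ring_1))"
  by (simp add: algebra_simps)

lemma ring_inj: "(a*z1+b)*(c*z2+d) - (a*z2+b)*(c*z1+d) = (a*d - b*c)*(z1 - (z2::'b::comm_ring_1))"
  by (simp add: algebra_simps)

lemma add_nz: "(x::'a) \<noteq> y \<Longrightarrow> x + y \<noteq> 0"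
  by (simp add: add_eq0)

lemma cr_real:
  assumes x: "x1 \<in> Uroots q" "x2 \<in> Uroots q" "x3 \<in> Uroots q" "(z::'a) \<in> Uroots q"
    and d: "x1 \<noteq> x2" "z \<noteq> x3"
  shows "(((x2+x3)*(z+x1))/((x2+x1)*(z+x3)))^q = ((x2+x3)*(z+x1))/((x2+x1)*(z+x3))"
proof -
  have nz: "x1 \<noteq> 0" "x2 \<noteq> 0" "x3 \<noteq> 0" "z \<noteq> 0" using x U_nz by auto
  have n1: "x2 + x1 \<noteq> 0" "z + x3 \<noteq> 0" using d by (auto simp: add_eq0)
  have "(((x2+x3)*(z+x1))/((x2+x1)*(z+x3)))^q = ((1/x2+1/x3)*(1/z+1/x1))/((1/x2+1/x1)*(1/z+1/x3))"
    by (simp add: power_divide cj_mult cj_add cj_U x)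
  also have "(1/x2+1/x3)*(1/z+1/x1) = ((x2+x3)*(z+x1))/(x1*x2*x3*z)"
    using nz by (simp add: field_simps)
  also have "(1/x2+1/x1)*(1/z+1/x3) = ((x2+x1)*(z+x3))/(x1*x2*x3*z)"
    using nz by (simp add: field_simps)
  also have "((x2+x3)*(z+x1))/(x1*x2*x3*z) / (((x2+x1)*(z+x3))/(x1*x2*x3*z))
      = ((x2+x3)*(z+x1))/((x2+x1)*(z+x3))"
    using nz by simp
  finally show ?thesis .
qed

lemma inv_cr:
  assumes y: "y1 \<in> Uroots q" "y2 \<in> Uroots q" "y3 \<in> Uroots q"
    and d: "y1 \<noteq> y2" "y2 \<noteq> y3" "y1 \<noteq> y3" and r: "(r::'a)^q = r"
  shows "(y2+y1)*r + (y2+y3) \<noteq> 0 \<and>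
    (y3*(y2+y1)*r + y1*(y2+y3)) / ((y2+y1)*r + (y2+y3)) \<in> Uroots q"
proof -
  define num where "num = y3*(y2+y1)*r + y1*(y2+y3)"
  define den where "den = (y2+y1)*r + (y2+y3)"
  define P where "P = y1*y2*y3"
  have nz: "y1 \<noteq> 0" "y2 \<noteq> 0" "y3 \<noteq> 0" using y U_nz by auto
  have P0: "P \<noteq> 0" using nz by (simp add: P_def)
  have a: "y2 + y1 \<noteq> 0" "y2 + y3 \<noteq> 0" "y3 + y1 \<noteq> 0" using d by (auto simp: add_eq0)
  have cn: "num^q = den / P"
  proof -
    have "num^q = (1/y3)*(1/y2+1/y1)*r + (1/y1)*(1/y2+1/y3)"
      by (simp add: num_def cj_mult cj_add cj_U y r)
    also have "\<dots> = den / P" using nz by (simp add: den_def P_def field_simps)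
    finally show ?thesis .
  qed
  have cd: "den^q = num / P"
  proof -
    have "den^q = (1/y2+1/y1)*r + (1/y2+1/y3)"
      by (simp add: den_def cj_mult cj_add cj_U y r)
    also have "\<dots> = num / P" using nz by (simp add: num_def P_def field_simps)
    finally show ?thesis .
  qed
  have den0: "den \<noteq> 0"
  proof
    assume D0: "den = 0"
    then have "num^q = 0" using cn by simp
    then have N0: "num = 0" using q4 by simp
    have e1: "(y2+y1)*r = y2+y3" using D0 by (simp add: den_def add_eq0)
    have "num = (y2+y1)*r*(y3+y1)"
      by (simp add: num_def algebra_simps e1[symmetric])
    then have "r = 0" using N0 a by simp
    then show False using e1 a by simp
  qed
  have num0: "num \<noteq> 0"
  proof
    assume "num = 0"
    then have "den^q = 0" using cd by simp
    then show False using den0 q4 by simp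
  qed
  have "(num/den)^(q+1) = (num^q/den^q) * (num/den)" by (simp add: power_divide mult.commute)
  also have "\<dots> = 1" unfolding cn cd using num0 den0 P0 by (simp add: field_simps mult.commute)
  finally show ?thesis using den0 by (simp add: Uroots_def num_def den_def)
qed


lemma three_trans:
  assumes x: "x1 \<in> Uroots q" "x2 \<in> Uroots q" "x3 \<in> Uroots q"
    and dx: "x1 \<noteq> x2" "x2 \<noteq> x3" "x1 \<noteq> x3"
    and y: "y1 \<in> Uroots q" "y2 \<in> Uroots q" "y3 \<in> Uroots q"
    and dy: "y1 \<noteq> y2" "y2 \<noteq> y3" "y1 \<noteq> (y3::'a)"
  shows "\<exists>\<pi>\<in>Stab q. \<exists>g. bij_betw g (Uroots q) (Uroots q) \<and> (\<forall>u\<in>Uroots q. \<pi> (Some u) = Some (g u))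
     \<and> g x1 = y1 \<and> g x2 = y2 \<and> g x3 = y3"
proof -
  let ?U = "Uroots q :: 'a set"
  define \<alpha> where "\<alpha> = x2 + x3"
  define \<beta> where "\<beta> = x1 * (x2 + x3)"
  define \<gamma> where "\<gamma> = x2 + x1"
  define \<delta> where "\<delta> = x3 * (x2 + x1)"
  define A where "A = y3 * (y2 + y1)"
  define B where "B = y1 * (y2 + y3)"
  define C where "C = y2 + y1"
  define D where "D = y2 + y3"
  define a where "a = A*\<alpha> + B*\<gamma>"
  define b where "b = A*\<beta> + B*\<delta>"
  define c where "c = C*\<alpha> + D*\<gamma>"
  define d where "d = C*\<beta> + D*\<delta>"
  define F where "F z = (a*z+b)/(c*z+d)" for z
  have nzx: "x2 + x1 \<noteq> 0" "x2 + x3 \<noteq> 0" "x3 + x1 \<noteq> 0" using dx by (auto simp: add_eq0)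
  have nzy: "y2 + y1 \<noteq> 0" "y2 + y3 \<noteq> 0" "y3 + y1 \<noteq> 0" using dy by (auto simp: add_eq0)
  have cz: "c*z+d = C*((x2+x3)*(z+x1)) + D*((x2+x1)*(z+x3))" for z
    by (simp add: c_def d_def \<alpha>_def \<beta>_def \<gamma>_def \<delta>_def algebra_simps)
  have az: "a*z+b = A*((x2+x3)*(z+x1)) + B*((x2+x1)*(z+x3))" for z
    by (simp add: a_def b_def \<alpha>_def \<beta>_def \<gamma>_def \<delta>_def algebra_simps)
  have gen: "c*z+d = ((x2+x1)*(z+x3)) * (C*r + D) \<and> a*z+b = ((x2+x1)*(z+x3)) * (A*r + B)"
    if "z \<noteq> x3" "r = ((x2+x3)*(z+x1))/((x2+x1)*(z+x3))" for z r
  proof -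
    have Q: "(x2+x1)*(z+x3) \<noteq> 0" using that nzx by (simp add: add_eq0)
    show ?thesis unfolding cz az that(2) using Q by (simp add: field_simps)
  qed
  have Fz: "c*z+d \<noteq> 0 \<and> F z \<in> ?U" if z: "z \<in> ?U" for z
  proof (cases "z = x3")
    case True
    have P: "(x2+x3)*(x3+x1) \<noteq> 0" using nzx by simp
    have Q: "(x2+x1)*(z+x3) = 0" using True xx by simp
    have "c*z+d = C*((x2+x3)*(x3+x1))" using cz[of z] Q True by simp
    moreover have "a*z+b = A*((x2+x3)*(x3+x1))" using az[of z] Q True by simp
    ultimately have "c*z+d \<noteq> 0" "F z = y3" using P nzy by (auto simp: F_def A_def C_def)
    then show ?thesis using y by simp
  next
    case False
    define r where "r = ((x2+x3)*(z+x1))/((x2+x1)*(z+x3))"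
    have rq: "r^q = r" unfolding r_def by (rule cr_real[OF x z dx(1) False])
    have Q: "(x2+x1)*(z+x3) \<noteq> 0" using False nzx by (simp add: add_eq0)
    have ic: "C*r + D \<noteq> 0 \<and> (A*r + B)/(C*r + D) \<in> ?U"
      using inv_cr[OF y dy rq] by (simp add: A_def B_def C_def D_def mult.assoc)
    have g: "c*z+d = ((x2+x1)*(z+x3)) * (C*r + D)" "a*z+b = ((x2+x1)*(z+x3)) * (A*r + B)"
      using gen[OF False r_def] by auto
    then have "F z = (A*r + B)/(C*r + D)" using Q by (simp add: F_def)
    then show ?thesis using g ic Q by simp
  qed
  have Fx1: "F x1 = y1"
  proof -
    have g: "c*x1+d = ((x2+x1)*(x1+x3)) * (C*0 + D)" "a*x1+b = ((x2+x1)*(x1+x3)) * (A*0 + B)"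
      using gen[OF dx(3), of 0] xx by auto
    have "(x2+x1)*(x1+x3) \<noteq> 0" using nzx by (simp add: add.commute)
    then show ?thesis using g nzy by (simp add: F_def B_def D_def)
  qed
  have Fx2: "F x2 = y2"
  proof -
    have r1: "((x2+x3)*(x2+x1))/((x2+x1)*(x2+x3)) = 1" using nzx by simp
    have g: "c*x2+d = ((x2+x1)*(x2+x3)) * (C*1 + D)" "a*x2+b = ((x2+x1)*(x2+x3)) * (A*1 + B)"
      using gen[OF dx(2), of 1] r1 by auto
    have e1: "C*1 + D = y3 + y1"
    proof -
      have "C*1 + D = (y3 + y1) + (y2 + y2)" by (simp add: C_def D_def algebra_simps)
      then show ?thesis using xx by simp
    qed
    have e2: "A*1 + B = y2 * (y3 + y1)"
    proof -
      have "A*1 + B = y2 * (y3 + y1) + (y1*y3 + y1*y3)" by (simp add: A_def B_def algebra_simps)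
      then show ?thesis using xx by simp
    qed
    have "(x2+x1)*(x2+x3) \<noteq> 0" using nzx by simp
    then show ?thesis using g e1 e2 nzy by (simp add: F_def)
  qed
  have Fx3: "F x3 = y3"
  proof -
    have P: "(x2+x3)*(x3+x1) \<noteq> 0" using nzx by simp
    have Q: "(x2+x1)*(x3+x3) = 0" using xx by simp
    have "c*x3+d = C*((x2+x3)*(x3+x1))" using cz[of x3] Q by simp
    moreover have "a*x3+b = A*((x2+x3)*(x3+x1))" using az[of x3] Q by simp
    ultimately show ?thesis using P nzy by (auto simp: F_def A_def C_def)
  qed
  have det: "a*d - b*c \<noteq> 0"
  proof -
    have "a*d - b*c = (A*D - B*C)*(\<alpha>*\<delta> - \<beta>*\<gamma>)"
      unfolding a_def b_def c_def d_def by (rule ring_det)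
    also have "A*D - B*C = (y2+y1)*(y2+y3)*(y3+y1)"
      by (simp add: A_def B_def C_def D_def algebra_simps)
    also have "\<alpha>*\<delta> - \<beta>*\<gamma> = (x2+x3)*(x2+x1)*(x3+x1)"
      by (simp add: \<alpha>_def \<beta>_def \<gamma>_def \<delta>_def algebra_simps)
    finally show ?thesis using nzx nzy by simp
  qed
  have Finj: "inj_on F ?U"
  proof (rule inj_onI)
    fix z1 z2 assume z: "z1 \<in> ?U" "z2 \<in> ?U" and e: "F z1 = F z2"
    have n: "c*z1+d \<noteq> 0" "c*z2+d \<noteq> 0" using Fz z by auto
    then have "(a*z1+b)*(c*z2+d) = (a*z2+b)*(c*z1+d)" using e by (simp add: F_def frac_eq_eq)
    then have "(a*z1+b)*(c*z2+d) - (a*z2+b)*(c*z1+d) = 0" by simp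
    then have "(a*d - b*c)*(z1 - z2) = 0" by (simp only: ring_inj)
    then have "z1 - z2 = 0" using det by (simp only: mult_eq_0_iff) blast
    then show "z1 = z2" by (simp add: add_eq0)
  qed
  have FU: "F ` ?U = ?U" by (rule endo_inj_surj) (use Fz Finj in auto)
  have bij: "bij_betw F ?U ?U" using Finj FU by (simp add: bij_betw_def)
  define \<pi> where "\<pi> = mobius a b c d"
  have piS: "\<pi> (Some u) = Some (F u)" if "u \<in> ?U" for u
    using Fz[OF that] by (simp add: \<pi>_def mobius_def F_def)
  have "\<pi> ` (Some ` ?U) = Some ` (F ` ?U)"
    by (auto simp: image_image piS intro!: image_cong)
  then have "\<pi> ` (Some ` ?U) = Some ` ?U" using FU by simp
  moreover have "\<pi> \<in> PGL2" unfolding PGL2_def \<pi>_def using det by blast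
  ultimately have "\<pi> \<in> Stab q" by (simp add: Stab_def)
  then show ?thesis using bij piS Fx1 Fx2 Fx3 by blast
qed


lemma trans_le:
  assumes inv: "invariant q Bl" and sub: "\<forall>B\<in>Bl. B \<subseteq> Uroots q"
    and T: "T \<subseteq> (Uroots q :: 'a set)" "card T = 3" and T': "T' \<subseteq> Uroots q" "card T' = 3"
  shows "card {B\<in>Bl. T \<subseteq> B} \<le> card {B\<in>Bl. T' \<subseteq> B}"
proof -
  obtain x1 x2 x3 where Tx: "T = {x1,x2,x3}" "x1 \<noteq> x2" "x2 \<noteq> x3" "x1 \<noteq> x3"
    using T(2) by (auto simp: card_3_iff)
  obtain y1 y2 y3 where Ty: "T' = {y1,y2,y3}" "y1 \<noteq> y2" "y2 \<noteq> y3" "y1 \<noteq> y3"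
    using T'(2) by (auto simp: card_3_iff)
  obtain \<pi> g where pi: "\<pi> \<in> Stab q" and bij: "bij_betw g (Uroots q) (Uroots q)"
    and gs: "\<forall>u\<in>Uroots q. \<pi> (Some u) = Some (g u)" and gx: "g x1 = y1" "g x2 = y2" "g x3 = y3"
    using three_trans[of x1 x2 x3 y1 y2 y3] T T' Tx Ty by auto
  have ginj: "inj_on g (Uroots q)" using bij bij_betw_def by blast
  have gT: "g ` T = T'" using Tx Ty gx by auto
  have img: "act \<pi> ` {B\<in>Bl. T \<subseteq> B} \<subseteq> {B\<in>Bl. T' \<subseteq> B}"
  proof
    fix X assume "X \<in> act \<pi> ` {B\<in>Bl. T \<subseteq> B}"
    then obtain B where B: "B \<in> Bl" "T \<subseteq> B" and X: "X = act \<pi> B" by blast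
    have BU: "B \<subseteq> Uroots q" using sub B by blast
    have "X \<in> Bl" using inv B pi X by (auto simp: invariant_def)
    moreover have "T' \<subseteq> X" using act_eq[OF gs BU] X gT B(2) by auto
    ultimately show "X \<in> {B\<in>Bl. T' \<subseteq> B}" by simp
  qed
  have inj: "inj_on (act \<pi>) {B\<in>Bl. T \<subseteq> B}"
  proof (rule inj_onI)
    fix B1 B2 assume B1: "B1 \<in> {B\<in>Bl. T \<subseteq> B}" and B2: "B2 \<in> {B\<in>Bl. T \<subseteq> B}"
      and e: "act \<pi> B1 = act \<pi> B2"
    have U: "B1 \<subseteq> Uroots q" "B2 \<subseteq> Uroots q" using sub B1 B2 by auto
    have "g ` B1 = g ` B2" using e act_eq[OF gs U(1)] act_eq[OF gs U(2)] by simp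
    then show "B1 = B2" using inj_on_image_eq_iff[OF ginj U] by simp
  qed
  show ?thesis by (rule card_inj_on_le[OF inj img]) simp
qed

lemma design:
  assumes inv: "invariant q Bl" and sub: "\<forall>B\<in>Bl. B \<subseteq> (Uroots q :: 'a set)"
    and B0: "B0 \<in> Bl" "card B0 \<ge> 3"
  shows "is_t_design 3 (Uroots q) Bl"
proof -
  obtain T0 where T0: "T0 \<subseteq> B0" "card T0 = 3" using obtain_subset_with_card_n[OF B0(2)] by blast
  have T0U: "T0 \<subseteq> Uroots q" using T0 sub B0 by blast
  define lam where "lam = card {B\<in>Bl. T0 \<subseteq> B}"
  have "B0 \<in> {B\<in>Bl. T0 \<subseteq> B}" using B0 T0 by simp
  then have lam0: "lam > 0" unfolding lam_def by (subst card_gt_0_iff) auto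
  have "card {B\<in>Bl. T \<subseteq> B} = lam" if "T \<subseteq> Uroots q" "card T = 3" for T
    using trans_le[OF inv sub that T0U T0(2)] trans_le[OF inv sub T0U T0(2) that] unfolding lam_def
    by simp
  then show ?thesis unfolding is_t_design_def using sub lam0 by blast
qed

end

theorem theorem24:
  fixes m k q :: nat
  assumes "m \<ge> 2" and "q = 2 ^ m"
    and "card (UNIV :: 'a::{field,finite} set) = q ^ 2"
    and "1 \<le> k" and "k \<le> q + 1"
    and "\<exists>v \<in> subfield_subcode q (dual_code q (C35 q :: ('a \<Rightarrow> 'a) set)). wt q v = k"
  shows "invariant q (blocks q k (subfield_subcode q (dual_code q (C35 q :: ('a \<Rightarrow> 'a) set))))
    \<and> (k > 3 \<longrightarrow> is_t_design 3 (Uroots q :: 'a set)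
          (blocks q k (subfield_subcode q (dual_code q (C35 q :: ('a \<Rightarrow> 'a) set)))))"
proof -
  let ?D = "subfield_subcode q (dual_code q (C35 q :: ('a \<Rightarrow> 'a) set))"
  have inv: "invariant q (blocks q k ?D)"
    unfolding invariant_def
  proof (intro ballI)
    fix B and \<pi> :: "'a option \<Rightarrow> 'a option" assume B: "B \<in> blocks q k ?D" and pi: "\<pi> \<in> Stab q"
    then obtain v where v: "v \<in> ?D" "wt q v = k" "B = supp q v" by (auto simp: blocks_def)
    show "act \<pi> B \<in> blocks q k ?D" using inv_main[OF assms(1,2,3) v(1) pi] v by simp
  qed
  have "is_t_design 3 (Uroots q :: 'a set) (blocks q k ?D)" if k3: "k > 3"
  proof -
    obtain v0 where v0: "v0 \<in> ?D" "wt q v0 = k" using assms(6) by blast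
    have sub: "\<forall>B\<in>blocks q k ?D. B \<subseteq> Uroots q" by (auto simp: blocks_def supp_def)
    have "supp q v0 \<in> blocks q k ?D" using v0 by (auto simp: blocks_def)
    moreover have "card (supp q v0) \<ge> 3" using v0 k3 by (simp add: wt_def)
    ultimately show ?thesis using design[OF assms(1,2,3) inv sub] by blast
  qed
  then show ?thesis using inv by blast
qed

end
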